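(* Let $|v_1\rangle,\dots,|v_8\rangle$ be unit vectors in $\mathbb{R}^3$ realizing the Clifton $01$-gadget measurement configuration, i.e., $\langle v_i|v_j\rangle = 0$ for every pair $\{i,j\}$ in $\{\{1,2\},\{1,3\},\{2,4\},\{2,6\},\{4,6\},\{3,5\},\{3,7\},\{5,7\},\{4,5\},\{6,8\},\{7,8\}\}$, and suppose they are measured on a state $|\psi\rangle$ for which the observed probabilities are $P(|v_1\rangle) = |\langle \psi|v_1\rangle|^2 = 1$ and $P(|v_8\rangle) = |\langle\psi|v_8\rangle|^2 = 1/9$. Then the set of projectors $\{|v_i\rangle\langle v_i|\}_{i=1}^8$ realizing this configuration in $\mathbb{R}^3$ is unique up to a common unitary (orthogonal) rotation and up to the relabelling $v_2\leftrightarrow v_3$, $v_4\leftrightarrow v_5$, $v_6\leftrightarrow v_7$.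
   Context: The Clifton $01$-gadget (Clifton bug) is the graph on vertices $1,\dots,8$ with the eleven edges listed in the claim; vertices $1$ and $8$ are its two distinguished non-adjacent vertices. $P(|v\rangle)$ denotes the probability of the outcome corresponding to the projector $|v\rangle\langle v|$ when measuring the state $|\psi\rangle$. *)

theory Defs
  imports "HOL-Analysis.Analysis"
begin

definition clifton_edges :: "(nat \<times> nat) set" where
  "clifton_edges = {(1,2),(1,3),(2,4),(2,6),(4,6),(3,5),(3,7),(5,7),(4,5),(6,8),(7,8)}"

definition proj :: "real^3 \<Rightarrow> real^3^3" where
  "proj v = (\<chi> i j. v $ i * v $ j)"

definition clifton_config :: "(nat \<Rightarrow> real^3) \<Rightarrow> real^3 \<Rightarrow> bool" where
  "clifton_config v psi \<longleftrightarrow>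
     (\<forall>i\<in>{1..8}. norm (v i) = 1) \<and>
     (\<forall>(i,j)\<in>clifton_edges. v i \<bullet> v j = 0) \<and>
     norm psi = 1 \<and>
     (psi \<bullet> v 1)\<^sup>2 = 1 \<and>
     (psi \<bullet> v 8)\<^sup>2 = 1/9"

definition clifton_swap :: "nat \<Rightarrow> nat" where
  "clifton_swap i = (if i = 2 then 3 else if i = 3 then 2 else if i = 4 then 5 else
     if i = 5 then 4 else if i = 6 then 7 else if i = 7 then 6 else i)"

end

theory Submission
  imports Defs
begin

lemma rot2:
  fixes x y u w :: real
  assumes "x^2 + y^2 = 1" "x*u + y*w = 0"
  shows "u = -(x*w - y*u)*y \<and> w = (x*w - y*u)*x"
  using assms by algebra

lemma quad_key:
  fixes u c :: real
  assumes u0: "0 \<le> u" and u1: "u < 1" and c0: "0 \<le> c" and c1: "c \<le> 1"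
    and f: "(1 - u*c)^2 = (8 - 9*u)*u*c*(1-c)"
  shows "u = 2/3 \<and> c = 3/4"
proof (cases "u < 8/9")
  case False
  have "(8 - 9*u)*u*c*(1-c) \<le> 0"
  proof -
    have "(9*u - 8)*u*c*(1-c) \<ge> 0" using False u0 c0 c1 by simp
    then show ?thesis by (simp add: algebra_simps)
  qed
  moreover have "(1 - u*c)^2 > 0"
  proof -
    have "u*c \<le> u" using u0 c1 mult_left_le by blast
    then show ?thesis using u1 by simp
  qed
  ultimately show ?thesis using f by simp
next
  case True
  have upos: "u > 0"
  proof (rule ccontr)
    assume "\<not> u > 0" then have "u = 0" using u0 by simp
    then show False using f by simp
  qed
  have id: "32*u*(1-u)*((1 - u*c)^2 - (8 - 9*u)*u*c*(1-c))
     = (16*u*(1-u)*c - u*(10-9*u))^2 + u*(8-9*u)*(3*u-2)^2"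
    by (simp add: algebra_simps power2_eq_square)
  have z: "(16*u*(1-u)*c - u*(10-9*u))^2 + u*(8-9*u)*(3*u-2)^2 = 0"
    using id f by simp
  have t2: "u*(8-9*u)*(3*u-2)^2 \<ge> 0" using upos True by simp
  have t1: "(16*u*(1-u)*c - u*(10-9*u))^2 \<ge> 0" by simp
  have a: "u*(8-9*u)*(3*u-2)^2 = 0" using z t1 t2 by linarith
  have b: "(16*u*(1-u)*c - u*(10-9*u))^2 = 0" using z t1 t2 by linarith
  from a have u23: "u = 2/3" using upos True by simp
  from b have "16*u*(1-u)*c = u*(10-9*u)" by simp
  then have "16*(2/3)*(1-2/3)*c = (2/3)*(10-9*(2/3::real))" using u23 by simp
  then have "c = 3/4" by simp
  with u23 show ?thesis by simp
qed

lemma alg_main: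
  fixes b g p q r s a5 b5 g5 a7 b7 g7 a8 b8 g8 :: real
  assumes n3: "b^2 + g^2 = 1" and n4: "p^2 + q^2 = 1" and n6: "r^2 + s^2 = 1"
    and o46: "p*r + q * s = 0"
    and n5: "a5^2 + b5^2 + g5^2 = 1" and o35: "b*b5 + g*g5 = 0" and o45: "p*a5 + q*g5 = 0"
    and n7: "a7^2 + b7^2 + g7^2 = 1" and o37: "b*b7 + g*g7 = 0" and o57: "a5*a7 + b5*b7 + g5*g7 = 0"
    and n8: "a8^2 + b8^2 + g8^2 = 1" and o68: "r*a8 + s*g8 = 0" and o78: "a7*a8 + b7*b8 + g7*g8 = 0"
    and p8: "a8^2 = 1/9"
  shows "b^2 = 1/4 \<and> p^2 = 1/3"
proof -
  define k where "k = b*g5 - g*b5"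
  have b5: "b5 = -k*g" and g5: "g5 = k*b" using rot2[OF n3 o35] unfolding k_def by auto
  have nk: "a5^2 + k^2 = 1" using n5 n3 unfolding b5 g5 by algebra
  have E1: "p*a5 + q*b*k = 0" using o45 unfolding g5 by (simp add: algebra_simps)
  define m where "m = b*g7 - g*b7"
  have b7: "b7 = -m*g" and g7: "g7 = m*b" using rot2[OF n3 o37] unfolding m_def by auto
  have nm: "a7^2 + m^2 = 1" using n7 n3 unfolding b7 g7 by algebra
  have o57': "a5*a7 + k*m = 0" using o57 n3 unfolding b7 g7 b5 g5 by algebra
  define mu where "mu = a5*m - k*a7"
  have a7: "a7 = -mu*k" and m: "m = mu*a5" using rot2[OF nk o57'] unfolding mu_def by auto
  have mu2: "mu^2 = 1" using nm nk unfolding a7 m by algebra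
  define la where "la = p * s - q*r"
  have r: "r = -la*q" and s: "s = la * p" using rot2[OF n4 o46] unfolding la_def by auto
  have la2: "la^2 = 1" using n6 n4 unfolding r s by algebra
  have "la * (p*g8 - q*a8) = 0" using o68 unfolding r s by (simp add: algebra_simps)
  then have o68': "p*g8 - q*a8 = 0" using la2 by auto
  define F where "F = p*a8 + q*g8"
  have a8: "a8 = F*p" and g8: "g8 = F*q"
    using rot2[of p q g8 "-a8"] n4 o68' unfolding F_def by (auto simp: algebra_simps)
  have nF: "F^2 + b8^2 = 1" using n8 n4 unfolding a8 g8 by algebra
  have "mu * (-k*F*p - g*a5*b8 + b*a5*F*q) = 0" using o78 unfolding a7 b7 g7 m a8 g8
    by (simp add: algebra_simps)
  moreover have "mu \<noteq> 0" using mu2 by auto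
  ultimately have "-k*F*p - g*a5*b8 + b*a5*F*q = 0" by simp
  then have E2: "g*a5*b8 = F*(b*a5*q - k*p)" by (simp add: algebra_simps)
  have pW: "p*(b*a5*q - k*p) = -k*(p^2 + b^2*q^2)" using E1 by algebra
  have Fp: "9*F^2*p^2 = 1" using p8 unfolding a8 by (simp add: power_mult_distrib)
  have pnz: "p \<noteq> 0" using Fp by auto
  have sq: "g^2*a5^2*(1 - F^2) = F^2*(b*a5*q - k*p)^2"
  proof -
    have "(g*a5*b8)^2 = (F*(b*a5*q - k*p))^2" using E2 by simp
    moreover have "b8^2 = 1 - F^2" using nF by simp
    ultimately show ?thesis by (simp add: power_mult_distrib)
  qed
  have st1: "9*p^2*g^2*a5^2 = g^2*a5^2 + (b*a5*q - k*p)^2"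
  proof -
    have "9*p^2*(g^2*a5^2*(1 - F^2)) = 9*p^2*(F^2*(b*a5*q - k*p)^2)" using sq by simp
    then show ?thesis using Fp by algebra
  qed
  have st2: "9*p^4*g^2*a5^2 = p^2*g^2*a5^2 + k^2*(p^2 + b^2*q^2)^2"
  proof -
    have "p^2*(9*p^2*g^2*a5^2) = p^2*(g^2*a5^2 + (b*a5*q - k*p)^2)" using st1 by simp
    then show ?thesis using pW by algebra
  qed
  have pa: "p^2*a5^2 = q^2*b^2*k^2"
  proof -
    have "(p*a5)^2 = (q*b*k)^2" using E1 by (simp add: eq_neg_iff_add_eq_0[symmetric])
    then show ?thesis by (simp add: power_mult_distrib)
  qed
  have knz: "k \<noteq> 0"
  proof
    assume "k = 0"
    then have "a5^2 = 1" "p*a5 = 0" using nk E1 by auto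
    then show False using pnz by auto
  qed
  have st3: "k^2*((9*p^2 - 1)*g^2*q^2*b^2) = k^2*((p^2 + b^2*q^2)^2)"
    using st2 pa by algebra
  then have st4: "(9*p^2 - 1)*g^2*q^2*b^2 = (p^2 + b^2*q^2)^2" using knz by simp
  have f: "(1 - q^2*g^2)^2 = (8 - 9*q^2)*q^2*g^2*(1-g^2)"
    using st4 n3 n4 by algebra
  have pp: "p^2 > 0" using pnz by simp
  have qq: "0 \<le> q^2" "q^2 < 1" using n4 pp by (simp, linarith)
  have gg: "0 \<le> g^2" "g^2 \<le> 1" using n3 by (auto, smt (verit) zero_le_power2)
  from quad_key[OF qq gg f] have "q^2 = 2/3" "g^2 = 3/4" by auto
  then show ?thesis using n3 n4 by auto
qed

lemma orth_inner:
  fixes Q :: "real^3^3"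
  assumes "orthogonal_matrix Q"
  shows "(Q *v x) \<bullet> (Q *v y) = x \<bullet> y"
proof -
  have "orthogonal_transformation ((*v) Q)"
    using assms by (simp add: orthogonal_transformation_matrix matrix_vector_mul_linear)
  then show ?thesis unfolding orthogonal_transformation_def by blast
qed

lemma proj_neg: "proj (-x) = proj x"
  by (simp add: proj_def)

lemma proj_mult: "proj (Q *v x) = Q ** proj x ** transpose Q"
  by (simp add: proj_def vec_eq_iff matrix_matrix_mult_def matrix_vector_mult_def
      transpose_def sum_3 forall_3 algebra_simps)

lemma inner3: "(x::real^3) \<bullet> y = x$1*y$1 + x$2*y$2 + x$3*y$3"
  by (simp add: inner_vec_def sum_3)

lemma perp_unique:
  fixes a b y c :: "real^3"
  assumes "y \<bullet> a = 0" "y \<bullet> b = 0" "c \<bullet> a = 0" "c \<bullet> b = 0"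
    and "norm y = 1" "norm c = 1" and nz: "cross3 a b \<noteq> 0"
  shows "y = c \<or> y = -c"
proof -
  define n where "n = cross3 a b"
  have key: "(n \<bullet> n) *\<^sub>R z = (n \<bullet> z) *\<^sub>R n" if "z \<bullet> a = 0" "z \<bullet> b = 0" for z
  proof -
    have h1: "z$1*a$1 + z$2*a$2 + z$3*a$3 = 0" and h2: "z$1*b$1 + z$2*b$2 + z$3*b$3 = 0"
      using that by (simp_all add: inner3)
    show ?thesis unfolding n_def
      by (simp add: vec_eq_iff forall_3 cross3_def inner3) (use h1 h2 in algebra)
  qed
  have nn: "n \<bullet> n > 0" using nz n_def by simp
  define al where "al = (n \<bullet> y)/(n \<bullet> n)"
  define be where "be = (n \<bullet> c)/(n \<bullet> n)"
  have "y = (1/(n \<bullet> n)) *\<^sub>R ((n \<bullet> n) *\<^sub>R y)" using nn by simp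
  also have "\<dots> = al *\<^sub>R n" using key[OF assms(1,2)] unfolding al_def by simp
  finally have y: "y = al *\<^sub>R n" .
  have "c = (1/(n \<bullet> n)) *\<^sub>R ((n \<bullet> n) *\<^sub>R c)" using nn by simp
  also have "\<dots> = be *\<^sub>R n" using key[OF assms(3,4)] unfolding be_def by simp
  finally have c: "c = be *\<^sub>R n" .
  have "y \<bullet> y = 1" "c \<bullet> c = 1" using assms(5,6) by (simp_all add: norm_eq_1)
  then have "al^2 * (n \<bullet> n) = 1" "be^2 * (n \<bullet> n) = 1"
    unfolding y c by (simp_all add: power2_eq_square)
  then have "al^2 * (n \<bullet> n) = be^2 * (n \<bullet> n)" by simp
  then have "al^2 = be^2" using nn by (metis mult_right_cancel less_irrefl)
  then have "al = be \<or> al = -be" by (simp add: power2_eq_iff)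
  then show ?thesis using y c by auto
qed

definition cc :: "nat \<Rightarrow> real^3" where
  "cc i = (let s2 = sqrt 2; s3 = sqrt 3 in
     if i = 1 then vector [1, 0, 0]
     else if i = 2 then vector [0, 1, 0]
     else if i = 3 then vector [0, 1/2, s3/2]
     else if i = 4 then vector [s3/3, 0, s2 * s3/3]
     else if i = 5 then vector [s3/3, s2/2, -s2 * s3/6]
     else if i = 6 then vector [-s2 * s3/3, 0, s3/3]
     else if i = 7 then vector [-s2 * s3/3, 1/2, -s3/6]
     else vector [1/3, s2 * s3/3, s2/3])"

lemma s2: "sqrt 2 ^ 2 = (2::real)" by simp
lemma s3: "sqrt 3 ^ 2 = (3::real)" by simp

lemma cc_vals:
  "cc 1 = vector [1, 0, 0]" "cc 2 = vector [0, 1, 0]"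
  "cc 3 = vector [0, 1/2, sqrt 3/2]" "cc 4 = vector [sqrt 3/3, 0, sqrt 2 * sqrt 3/3]"
  "cc 5 = vector [sqrt 3/3, sqrt 2/2, -sqrt 2 * sqrt 3/6]"
  "cc 6 = vector [-sqrt 2 * sqrt 3/3, 0, sqrt 3/3]"
  "cc 7 = vector [-sqrt 2 * sqrt 3/3, 1/2, -sqrt 3/6]"
  "cc 8 = vector [1/3, sqrt 2 * sqrt 3/3, sqrt 2/3]"
  by (simp_all add: cc_def Let_def)

lemma cc_o0: "cc 5 \<bullet> cc 3 = 0"
  unfolding cc_vals inner3 vector_3 by (simp add: field_simps)

lemma cc_o1: "cc 5 \<bullet> cc 4 = 0"
  unfolding cc_vals inner3 vector_3 by (simp add: field_simps)

lemma cc_o2: "cc 6 \<bullet> cc 2 = 0"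
  unfolding cc_vals inner3 vector_3 by (simp add: field_simps)

lemma cc_o3: "cc 6 \<bullet> cc 4 = 0"
  unfolding cc_vals inner3 vector_3 by (simp add: field_simps)

lemma cc_o4: "cc 7 \<bullet> cc 3 = 0"
  unfolding cc_vals inner3 vector_3 by (simp add: field_simps)

lemma cc_o5: "cc 7 \<bullet> cc 5 = 0"
  unfolding cc_vals inner3 vector_3 by (simp add: field_simps)

lemma cc_o6: "cc 8 \<bullet> cc 6 = 0"
  unfolding cc_vals inner3 vector_3 by (simp add: field_simps)

lemma cc_o7: "cc 8 \<bullet> cc 7 = 0"
  unfolding cc_vals inner3 vector_3 by (simp add: field_simps)

lemmas cc_orth = cc_o0 cc_o1 cc_o2 cc_o3 cc_o4 cc_o5 cc_o6 cc_o7

lemma cc_n5: "norm (cc 5) = 1"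
  unfolding norm_eq_1 cc_vals inner3 vector_3 by (simp add: field_simps)

lemma cc_n6: "norm (cc 6) = 1"
  unfolding norm_eq_1 cc_vals inner3 vector_3 by (simp add: field_simps)

lemma cc_n7: "norm (cc 7) = 1"
  unfolding norm_eq_1 cc_vals inner3 vector_3 by (simp add: field_simps)

lemma cc_n8: "norm (cc 8) = 1"
  unfolding norm_eq_1 cc_vals inner3 vector_3 by (simp add: field_simps)

lemmas cc_norm = cc_n5 cc_n6 cc_n7 cc_n8

lemma cross_nz: fixes x y :: "real^3" assumes "x$2*y$3 - x$3*y$2 \<noteq> 0"
  shows "cross3 x y \<noteq> 0"
proof
  assume "cross3 x y = 0"
  then have "(cross3 x y)$1 = 0" by simp
  then show False using assms by (simp add: cross3_def)
qed

lemma cc_cross: "cross3 (cc 3) (cc 4) \<noteq> 0" "cross3 (cc 2) (cc 4) \<noteq> 0"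
  "cross3 (cc 3) (cc 5) \<noteq> 0" "cross3 (cc 6) (cc 7) \<noteq> 0"
  by (rule cross_nz, simp add: cc_vals algebra_simps)+

definition frm :: "real \<Rightarrow> real \<Rightarrow> real^3 \<Rightarrow> real^3 \<Rightarrow> real^3^3" where
  "frm e1 e2 a b = vector [e1 *\<^sub>R a, e2 *\<^sub>R b, cross3 a b]"

lemma frm_mult: "frm e1 e2 a b *v x = vector [e1 * (a \<bullet> x), e2 * (b \<bullet> x), cross3 a b \<bullet> x]"
  by (simp add: frm_def vec_eq_iff forall_3 matrix_vector_mult_def inner_vec_def sum_3
      sum_distrib_left algebra_simps)

lemma frm_orth:
  assumes na: "norm a = 1" and nb: "norm b = 1" and ab: "a \<bullet> b = 0"
    and e1: "\<bar>e1\<bar> = 1" and e2: "\<bar>e2\<bar> = 1"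
  shows "orthogonal_matrix (frm e1 e2 a b)"
proof -
  have r: "row i M = M $ i" for i and M :: "real^3^3" by (simp add: row_def vec_eq_iff)
  have nc: "norm (cross3 a b) = 1" using norm_cross_dot[of a b] na nb ab
    by (simp add: power2_eq_1_iff norm_ge_zero) (smt (verit) norm_ge_zero power2_eq_1_iff)
  show ?thesis
    unfolding orthogonal_matrix_orthonormal_rows r frm_def
    using na nb nc e1 e2 ab
    by (auto simp: forall_3 orthogonal_def dot_cross_self inner_commute)
qed

lemma parseval:
  assumes na: "norm a = 1" and nb: "norm b = 1" and ab: "a \<bullet> b = 0"
  shows "x \<bullet> z = (a \<bullet> x)*(a \<bullet> z) + (b \<bullet> x)*(b \<bullet> z) + (cross3 a b \<bullet> x)*(cross3 a b \<bullet> z)"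
proof -
  have "x \<bullet> z = (frm 1 1 a b *v x) \<bullet> (frm 1 1 a b *v z)"
    using orth_inner[OF frm_orth[OF na nb ab]] by simp
  then show ?thesis by (simp add: frm_mult inner3)
qed

lemma psi_lemma:
  fixes psi a x :: "real^3"
  assumes "norm psi = 1" "norm a = 1" "(psi \<bullet> a)^2 = 1"
  shows "(psi \<bullet> x)^2 = (a \<bullet> x)^2"
proof -
  define t where "t = psi \<bullet> a"
  have "norm (psi - t *\<^sub>R a)^2 = (psi - t *\<^sub>R a) \<bullet> (psi - t *\<^sub>R a)"
    by (rule power2_norm_eq_inner)
  also have "\<dots> = psi \<bullet> psi - 2*t*(psi \<bullet> a) + t^2 * (a \<bullet> a)"
    by (simp add: inner_diff_left inner_diff_right inner_commute
        power2_eq_square algebra_simps)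
  also have "\<dots> = 0"
  proof -
    have "psi \<bullet> psi = 1" "a \<bullet> a = 1" using assms(1,2) by (simp_all add: norm_eq_1)
    then show ?thesis using assms(3) unfolding t_def[symmetric] by (simp add: power2_eq_square)
  qed
  finally have "psi = t *\<^sub>R a" by simp
  then have "psi \<bullet> x = t * (a \<bullet> x)" by simp
  then show ?thesis using assms(3) unfolding t_def[symmetric] by (simp add: power_mult_distrib)
qed

lemma sgn_pair:
  fixes x y X Y :: real
  assumes "x^2 = X^2" "y^2 = Y^2" "x*y > 0" "X*Y > 0"
  shows "(x = X \<and> y = Y) \<or> (x = -X \<and> y = -Y)"
proof -
  have "x = X \<or> x = -X" "y = Y \<or> y = -Y" using assms(1,2) by (simp_all add: power2_eq_iff)
  then show ?thesis using assms(3,4) by auto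
qed

lemma perp_pm:
  fixes y a b ca cb c :: "real^3"
  assumes "y \<bullet> a = 0" "y \<bullet> b = 0" "a = ca \<or> a = -ca" "b = cb \<or> b = -cb"
    "c \<bullet> ca = 0" "c \<bullet> cb = 0" "norm y = 1" "norm c = 1" "cross3 ca cb \<noteq> 0"
  shows "y = c \<or> y = -c"
proof -
  have "y \<bullet> ca = 0" "y \<bullet> cb = 0" using assms(1-4) by auto
  then show ?thesis using perp_unique assms(5-9) by blast
qed

lemma orth_norm: "orthogonal_matrix Q \<Longrightarrow> norm (Q *v x) = norm (x::real^3)"
  by (simp add: norm_eq_sqrt_inner orth_inner)

lemma canon:
  assumes "clifton_config v psi"
  shows "\<exists>Q. orthogonal_matrix Q \<and> (\<forall>i\<in>{1..8}. Q *v v i = cc i \<or> Q *v v i = - cc i)"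
proof -
  from assms have N: "\<And>i. i \<in> {1..8} \<Longrightarrow> norm (v i) = 1"
    and E: "\<And>i j. (i,j) \<in> clifton_edges \<Longrightarrow> v i \<bullet> v j = 0"
    and np: "norm psi = 1" and p1: "(psi \<bullet> v 1)^2 = 1" and p8: "(psi \<bullet> v 8)^2 = 1/9"
    unfolding clifton_config_def by auto
  have n1: "norm (v 1) = 1" and n2: "norm (v 2) = 1" and n3: "norm (v 3) = 1"
    and n4: "norm (v 4) = 1" and n5: "norm (v 5) = 1" and n6: "norm (v 6) = 1"
    and n7: "norm (v 7) = 1" and n8: "norm (v 8) = 1" by (simp_all add: N)
  have i3: "v 3 \<bullet> v 3 = 1" and i4: "v 4 \<bullet> v 4 = 1" and i5: "v 5 \<bullet> v 5 = 1"
    and i6: "v 6 \<bullet> v 6 = 1" and i7: "v 7 \<bullet> v 7 = 1" and i8: "v 8 \<bullet> v 8 = 1"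
    and i1: "v 1 \<bullet> v 1 = 1" and i2: "v 2 \<bullet> v 2 = 1"
    using n1 n2 n3 n4 n5 n6 n7 n8 by (simp_all add: norm_eq_1)
  have o12: "v 1 \<bullet> v 2 = 0" and o13: "v 1 \<bullet> v 3 = 0" and o24: "v 2 \<bullet> v 4 = 0"
    and o26: "v 2 \<bullet> v 6 = 0" and o46: "v 4 \<bullet> v 6 = 0" and o35: "v 3 \<bullet> v 5 = 0"
    and o37: "v 3 \<bullet> v 7 = 0" and o57: "v 5 \<bullet> v 7 = 0" and o45: "v 4 \<bullet> v 5 = 0"
    and o68: "v 6 \<bullet> v 8 = 0" and o78: "v 7 \<bullet> v 8 = 0"
    by (simp_all add: E clifton_edges_def)
  have a8sq: "(v 1 \<bullet> v 8)^2 = 1/9" using psi_lemma[OF np n1 p1, of "v 8"] p8 by simp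
  define C where "C = cross3 (v 1) (v 2)"
  have P: "\<And>x z. x \<bullet> z = (v 1 \<bullet> x)*(v 1 \<bullet> z) + (v 2 \<bullet> x)*(v 2 \<bullet> z) + (C \<bullet> x)*(C \<bullet> z)"
    unfolding C_def by (rule parseval[OF n1 n2 o12])
  have h3: "(v 2 \<bullet> v 3)^2 + (C \<bullet> v 3)^2 = 1" using P[of "v 3" "v 3"] i3 o13
    by (simp add: power2_eq_square)
  have h4: "(v 1 \<bullet> v 4)^2 + (C \<bullet> v 4)^2 = 1" using P[of "v 4" "v 4"] i4 o24
    by (simp add: power2_eq_square)
  have h6: "(v 1 \<bullet> v 6)^2 + (C \<bullet> v 6)^2 = 1" using P[of "v 6" "v 6"] i6 o26
    by (simp add: power2_eq_square)
  have h46: "(v 1 \<bullet> v 4)*(v 1 \<bullet> v 6) + (C \<bullet> v 4)*(C \<bullet> v 6) = 0"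
    using P[of "v 4" "v 6"] o46 o24 by simp
  have h5: "(v 1 \<bullet> v 5)^2 + (v 2 \<bullet> v 5)^2 + (C \<bullet> v 5)^2 = 1" using P[of "v 5" "v 5"] i5
    by (simp add: power2_eq_square)
  have h35: "(v 2 \<bullet> v 3)*(v 2 \<bullet> v 5) + (C \<bullet> v 3)*(C \<bullet> v 5) = 0"
    using P[of "v 3" "v 5"] o35 o13 by simp
  have h45: "(v 1 \<bullet> v 4)*(v 1 \<bullet> v 5) + (C \<bullet> v 4)*(C \<bullet> v 5) = 0"
    using P[of "v 4" "v 5"] o45 o24 by simp
  have h7: "(v 1 \<bullet> v 7)^2 + (v 2 \<bullet> v 7)^2 + (C \<bullet> v 7)^2 = 1" using P[of "v 7" "v 7"] i7
    by (simp add: power2_eq_square)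
  have h37: "(v 2 \<bullet> v 3)*(v 2 \<bullet> v 7) + (C \<bullet> v 3)*(C \<bullet> v 7) = 0"
    using P[of "v 3" "v 7"] o37 o13 by simp
  have h57: "(v 1 \<bullet> v 5)*(v 1 \<bullet> v 7) + (v 2 \<bullet> v 5)*(v 2 \<bullet> v 7) + (C \<bullet> v 5)*(C \<bullet> v 7) = 0"
    using P[of "v 5" "v 7"] o57 by simp
  have h8: "(v 1 \<bullet> v 8)^2 + (v 2 \<bullet> v 8)^2 + (C \<bullet> v 8)^2 = 1" using P[of "v 8" "v 8"] i8
    by (simp add: power2_eq_square)
  have h68: "(v 1 \<bullet> v 6)*(v 1 \<bullet> v 8) + (C \<bullet> v 6)*(C \<bullet> v 8) = 0"
    using P[of "v 6" "v 8"] o68 o26 by simp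
  have h78: "(v 1 \<bullet> v 7)*(v 1 \<bullet> v 8) + (v 2 \<bullet> v 7)*(v 2 \<bullet> v 8) + (C \<bullet> v 7)*(C \<bullet> v 8) = 0"
    using P[of "v 7" "v 8"] o78 by simp
  from alg_main[OF h3 h4 h6 h46 h5 h35 h45 h7 h37 h57 h8 h68 h78 a8sq]
  have bsq: "(v 2 \<bullet> v 3)^2 = 1/4" and psq: "(v 1 \<bullet> v 4)^2 = 1/3" by auto
  have gsq: "(C \<bullet> v 3)^2 = 3/4" using h3 bsq by simp
  have qsq: "(C \<bullet> v 4)^2 = 2/3" using h4 psq by simp
  have bg: "(v 2 \<bullet> v 3)*(C \<bullet> v 3) \<noteq> 0" using bsq gsq by auto
  have pq: "(v 1 \<bullet> v 4)*(C \<bullet> v 4) \<noteq> 0" using psq qsq by auto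
  define e2 where "e2 = (if (v 2 \<bullet> v 3)*(C \<bullet> v 3) > 0 then 1 else -1::real)"
  define e1 where "e1 = (if (v 1 \<bullet> v 4)*(C \<bullet> v 4) > 0 then 1 else -1::real)"
  have e1a: "\<bar>e1\<bar> = 1" and e2a: "\<bar>e2\<bar> = 1" unfolding e1_def e2_def by auto
  have e1s: "e1^2 = 1" and e2s: "e2^2 = 1" unfolding e1_def e2_def by auto
  have sgnl: "\<And>x y::real. x*y \<noteq> 0 \<Longrightarrow> ((if x*y > 0 then 1 else -1)*x)*y > 0"
  proof -
    fix x y :: real assume h: "x*y \<noteq> 0"
    show "((if x*y > 0 then 1 else -1)*x)*y > 0"
    proof (cases "x*y > 0")
      case True then show ?thesis by (simp add: mult.assoc)
    next
      case False then have "x*y < 0" using h by linarith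
      then show ?thesis by (simp add: mult.assoc)
    qed
  qed
  have bgp: "(e2*(v 2 \<bullet> v 3))*(C \<bullet> v 3) > 0" using sgnl[OF bg] unfolding e2_def .
  have pqp: "(e1*(v 1 \<bullet> v 4))*(C \<bullet> v 4) > 0" using sgnl[OF pq] unfolding e1_def .
  define Q where "Q = frm e1 e2 (v 1) (v 2)"
  have oQ: "orthogonal_matrix Q" unfolding Q_def using frm_orth[OF n1 n2 o12 e1a e2a] .
  have Qm: "\<And>x. Q *v x = vector [e1 * (v 1 \<bullet> x), e2 * (v 2 \<bullet> x), C \<bullet> x]"
    unfolding Q_def C_def by (rule frm_mult)
  have C1: "C \<bullet> v 1 = 0" and C2: "C \<bullet> v 2 = 0" unfolding C_def
    by (simp_all add: dot_cross_self inner_commute)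
  have e1c: "e1 = 1 \<or> e1 = -1" and e2c: "e2 = 1 \<or> e2 = -1" unfolding e1_def e2_def by auto
  have Y1: "Q *v v 1 = cc 1 \<or> Q *v v 1 = - cc 1"
  proof -
    have "Q *v v 1 = vector [e1, 0, 0]"
      unfolding Qm i1 inner_commute[of "v 2" "v 1"] o12 C1 by simp
    then show ?thesis using e1c unfolding cc_vals by (auto simp: vec_eq_iff forall_3)
  qed
  have Y2: "Q *v v 2 = cc 2 \<or> Q *v v 2 = - cc 2"
  proof -
    have "Q *v v 2 = vector [0, e2, 0]"
      unfolding Qm i2 o12 C2 by simp
    then show ?thesis using e2c unfolding cc_vals by (auto simp: vec_eq_iff forall_3)
  qed
  have Y3: "Q *v v 3 = cc 3 \<or> Q *v v 3 = - cc 3"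
  proof -
    have "(e2*(v 2 \<bullet> v 3))^2 = e2^2 * (v 2 \<bullet> v 3)^2" by (rule power_mult_distrib)
    also have "\<dots> = 1/4" unfolding e2s bsq by simp
    also have "\<dots> = (1/2)^2" by (simp add: power2_eq_square)
    finally have "(e2*(v 2 \<bullet> v 3))^2 = (1/2)^2" .
    moreover have "(C \<bullet> v 3)^2 = (sqrt 3/2)^2" using gsq by (simp add: power_divide)
    moreover have "(1/2) * (sqrt 3/2) > (0::real)" by simp
    ultimately have "(e2*(v 2 \<bullet> v 3) = 1/2 \<and> C \<bullet> v 3 = sqrt 3/2) \<or>
                     (e2*(v 2 \<bullet> v 3) = -(1/2) \<and> C \<bullet> v 3 = -(sqrt 3/2))"
      using sgn_pair[OF _ _ bgp] by blast
    moreover have "Q *v v 3 = vector [0, e2*(v 2 \<bullet> v 3), C \<bullet> v 3]" unfolding Qm o13 by simp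
    ultimately show ?thesis unfolding cc_vals by (auto simp: vec_eq_iff forall_3)
  qed
  have Y4: "Q *v v 4 = cc 4 \<or> Q *v v 4 = - cc 4"
  proof -
    have "(e1*(v 1 \<bullet> v 4))^2 = e1^2 * (v 1 \<bullet> v 4)^2" by (rule power_mult_distrib)
    also have "\<dots> = 1/3" unfolding e1s psq by simp
    also have "\<dots> = (sqrt 3/3)^2" by (simp add: power_divide)
    finally have "(e1*(v 1 \<bullet> v 4))^2 = (sqrt 3/3)^2" .
    moreover have "(C \<bullet> v 4)^2 = (sqrt 2 * sqrt 3/3)^2" using qsq
      by (simp add: power_divide power_mult_distrib)
    moreover have "(sqrt 3/3) * (sqrt 2 * sqrt 3/3) > (0::real)" by simp
    ultimately have "(e1*(v 1 \<bullet> v 4) = sqrt 3/3 \<and> C \<bullet> v 4 = sqrt 2 * sqrt 3/3) \<or>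
                     (e1*(v 1 \<bullet> v 4) = -(sqrt 3/3) \<and> C \<bullet> v 4 = -(sqrt 2 * sqrt 3/3))"
      using sgn_pair[OF _ _ pqp] by blast
    moreover have "Q *v v 4 = vector [e1*(v 1 \<bullet> v 4), 0, C \<bullet> v 4]" unfolding Qm o24 by simp
    ultimately show ?thesis unfolding cc_vals by (auto simp: vec_eq_iff forall_3)
  qed
  have QI: "\<And>i j. (Q *v v i) \<bullet> (Q *v v j) = v i \<bullet> v j" using orth_inner[OF oQ] by simp
  have QN: "\<And>i. i \<in> {1..8} \<Longrightarrow> norm (Q *v v i) = 1" using orth_norm[OF oQ] N by simp
  have Y5: "Q *v v 5 = cc 5 \<or> Q *v v 5 = - cc 5"
    by (rule perp_pm[OF _ _ Y3 Y4 cc_orth(1,2) _ cc_norm(1) cc_cross(1)])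
       (auto simp: QI QN o35 o45 inner_commute)
  have Y6: "Q *v v 6 = cc 6 \<or> Q *v v 6 = - cc 6"
    by (rule perp_pm[OF _ _ Y2 Y4 cc_orth(3,4) _ cc_norm(2) cc_cross(2)])
       (auto simp: QI QN o26 o46 inner_commute)
  have Y7: "Q *v v 7 = cc 7 \<or> Q *v v 7 = - cc 7"
    by (rule perp_pm[OF _ _ Y3 Y5 cc_orth(5,6) _ cc_norm(3) cc_cross(3)])
       (auto simp: QI QN o37 o57 inner_commute)
  have Y8: "Q *v v 8 = cc 8 \<or> Q *v v 8 = - cc 8"
    by (rule perp_pm[OF _ _ Y6 Y7 cc_orth(7,8) _ cc_norm(4) cc_cross(4)])
       (auto simp: QI QN o68 o78 inner_commute)
  have "\<forall>i\<in>{1..8}. Q *v v i = cc i \<or> Q *v v i = - cc i"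
  proof
    fix i :: nat assume "i \<in> {1..8}"
    then have "i = 1 \<or> i = 2 \<or> i = 3 \<or> i = 4 \<or> i = 5 \<or> i = 6 \<or> i = 7 \<or> i = 8" by auto
    then show "Q *v v i = cc i \<or> Q *v v i = - cc i" using Y1 Y2 Y3 Y4 Y5 Y6 Y7 Y8 by blast
  qed
  then show ?thesis using oQ by blast
qed

lemma proj_back:
  assumes "orthogonal_matrix Q"
  shows "proj x = transpose Q ** proj (Q *v x) ** Q"
proof -
  have tq: "transpose Q ** Q = mat 1" using assms by (simp add: orthogonal_matrix_def)
  have "transpose Q ** proj (Q *v x) ** Q = transpose Q ** (Q ** proj x ** transpose Q) ** Q"
    by (simp add: proj_mult)
  also have "\<dots> = (transpose Q ** Q) ** proj x ** (transpose Q ** Q)"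
    by (simp add: matrix_mul_assoc)
  also have "\<dots> = proj x" by (simp add: tq)
  finally show ?thesis by simp
qed

theorem mainTheorem5:
  fixes v w :: "nat \<Rightarrow> real^3" and psi phi :: "real^3"
  assumes "clifton_config v psi" and "clifton_config w phi"
  shows "\<exists>U :: real^3^3. orthogonal_matrix U \<and>
           ((\<forall>i\<in>{1..8}. proj (w i) = U ** proj (v i) ** transpose U) \<or>
            (\<forall>i\<in>{1..8}. proj (w (clifton_swap i)) = U ** proj (v i) ** transpose U))"
proof -
  obtain Qv where oV: "orthogonal_matrix Qv" and V: "\<forall>i\<in>{1..8}. Qv *v v i = cc i \<or> Qv *v v i = - cc i"
    using canon[OF assms(1)] by blast
  obtain Qw where oW: "orthogonal_matrix Qw" and W: "\<forall>i\<in>{1..8}. Qw *v w i = cc i \<or> Qw *v w i = - cc i"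
    using canon[OF assms(2)] by blast
  define U where "U = transpose Qw ** Qv"
  have oU: "orthogonal_matrix U" unfolding U_def
    by (rule orthogonal_matrix_mul) (simp_all add: oV oW)
  have "\<forall>i\<in>{1..8}. proj (w i) = U ** proj (v i) ** transpose U"
  proof
    fix i :: nat assume i: "i \<in> {1..8}"
    have pv: "proj (Qv *v v i) = proj (cc i)" using V i proj_neg by metis
    have pw: "proj (Qw *v w i) = proj (cc i)" using W i proj_neg by metis
    have "proj (w i) = transpose Qw ** proj (Qw *v w i) ** Qw" by (rule proj_back[OF oW])
    also have "\<dots> = transpose Qw ** proj (Qv *v v i) ** Qw" by (simp add: pv pw)
    also have "\<dots> = transpose Qw ** (Qv ** proj (v i) ** transpose Qv) ** Qw" by (simp add: proj_mult)
    also have "\<dots> = U ** proj (v i) ** transpose U"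
      by (simp add: U_def matrix_transpose_mul matrix_mul_assoc)
    finally show "proj (w i) = U ** proj (v i) ** transpose U" .
  qed
  then show ?thesis using oU by blast
qed

end
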